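(* The group $Fr(162\times 4)$ is not isomorphic to any group $C(n,a,b)$ ($n$ a positive integer, $a,b$ integers).
   Context: For a positive integer $n$ and integers $a,b$, let $\eta=e^{2i\pi/n}$, $F(n,a,b)=\mathrm{diag}(\eta^a,\eta^b,\eta^{-a-b})$, $E=\begin{pmatrix}0&1&0\\0&0&1\\1&0&0\end{pmatrix}$, and $C(n,a,b)=\langle F(n,a,b),E\rangle\subset SU(3)$. Let $\omega=e^{2i\pi/3}$, $J$ the antidiagonal matrix with antidiagonal entries $1$, $G_1=\mathrm{diag}(e^{7i\pi/9},-e^{4i\pi/9},-e^{7i\pi/9})$, $G_2=\begin{pmatrix}-\tfrac12 e^{4i\pi/9}&\tfrac{1}{\sqrt2}e^{7i\pi/9}&\tfrac12 e^{4i\pi/9}\\ \tfrac{1}{\sqrt2}e^{7i\pi/9}&0&\tfrac{1}{\sqrt2}e^{7i\pi/9}\\ \tfrac12 e^{4i\pi/9}&\tfrac{1}{\sqrt2}e^{7i\pi/9}&-\tfrac12 e^{4i\pi/9}\end{pmatrix}$, $FUM=-\omega J$, $Fr(162\times 4)=\langle G_1,G_2,FUM\rangle$. *)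

theory Defs
  imports "HOL-Analysis.Analysis" "HOL-Algebra.Generated_Groups"
begin

definition GL3 :: "(complex^3^3) monoid" where
  "GL3 = \<lparr>carrier = {A. invertible A}, mult = (**), one = mat 1\<rparr>"

definition mat_group :: "(complex^3^3) set \<Rightarrow> (complex^3^3) monoid" where
  "mat_group S = GL3\<lparr>carrier := generate GL3 S\<rparr>"

definition mat3 :: "complex \<Rightarrow> complex \<Rightarrow> complex \<Rightarrow> complex \<Rightarrow> complex \<Rightarrow> complex
    \<Rightarrow> complex \<Rightarrow> complex \<Rightarrow> complex \<Rightarrow> complex^3^3" where
  "mat3 a11 a12 a13 a21 a22 a23 a31 a32 a33 =
     vector [vector [a11, a12, a13], vector [a21, a22, a23], vector [a31, a32, a33]]"

definition diag3 :: "complex \<Rightarrow> complex \<Rightarrow> complex \<Rightarrow> complex^3^3" where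
  "diag3 x y z = mat3 x 0 0 0 y 0 0 0 z"

definition eta :: "nat \<Rightarrow> complex" where
  "eta n = exp (2 * pi * \<i> / of_nat n)"

definition Fmat :: "nat \<Rightarrow> int \<Rightarrow> int \<Rightarrow> complex^3^3" where
  "Fmat n a b = diag3 (eta n powi a) (eta n powi b) (eta n powi (- a - b))"

definition Emat :: "complex^3^3" where
  "Emat = mat3 0 1 0 0 0 1 1 0 0"

definition Cgrp :: "nat \<Rightarrow> int \<Rightarrow> int \<Rightarrow> (complex^3^3) monoid" where
  "Cgrp n a b = mat_group {Fmat n a b, Emat}"

definition omega :: complex where "omega = exp (2 * pi * \<i> / 3)"

definition Jmat :: "complex^3^3" where "Jmat = mat3 0 0 1 0 1 0 1 0 0"

definition G1 :: "complex^3^3" where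
  "G1 = diag3 (exp (7 * pi * \<i> / 9)) (- exp (4 * pi * \<i> / 9)) (- exp (7 * pi * \<i> / 9))"

definition G2 :: "complex^3^3" where
  "G2 = (let p = exp (4 * pi * \<i> / 9); q = exp (7 * pi * \<i> / 9); s = 1 / complex_of_real (sqrt 2) in
     mat3 (- p / 2) (s * q) (p / 2)
          (s * q)   0      (s * q)
          (p / 2)   (s * q) (- p / 2))"

definition FUM :: "complex^3^3" where "FUM = mat (- omega) ** Jmat"

definition Fr162x4 :: "(complex^3^3) monoid" where
  "Fr162x4 = mat_group {G1, G2, FUM}"

end

theory Submission
  imports Defs
begin
lemma mat3_mult: "mat3 a11 a12 a13 a21 a22 a23 a31 a32 a33 ** mat3 b11 b12 b13 b21 b22 b23 b31 b32 b33 =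
  mat3 (a11*b11+a12*b21+a13*b31) (a11*b12+a12*b22+a13*b32) (a11*b13+a12*b23+a13*b33)
       (a21*b11+a22*b21+a23*b31) (a21*b12+a22*b22+a23*b32) (a21*b13+a22*b23+a23*b33)
       (a31*b11+a32*b21+a33*b31) (a31*b12+a32*b22+a33*b32) (a31*b13+a32*b23+a33*b33)"
  unfolding mat3_def matrix_matrix_mult_def by (simp add: vec_eq_iff forall_3 sum_3)
lemma mat3_eq: "mat3 a11 a12 a13 a21 a22 a23 a31 a32 a33 = mat3 b11 b12 b13 b21 b22 b23 b31 b32 b33 \<longleftrightarrow>
  a11=b11 \<and> a12=b12 \<and> a13=b13 \<and> a21=b21 \<and> a22=b22 \<and> a23=b23 \<and> a31=b31 \<and> a32=b32 \<and> a33=b33"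
  unfolding mat3_def by (auto simp add: vec_eq_iff forall_3)
lemma mat1: "mat 1 = mat3 1 0 0 0 1 0 0 0 1"
  unfolding mat3_def mat_def by (simp add: vec_eq_iff forall_3)

definition SC :: "(complex^3^3) set" where
 "SC = {mat3 x 0 0 0 y 0 0 0 z | x y z. x*y*z=1} \<union> {mat3 0 x 0 0 0 y z 0 0 | x y z. x*y*z=1}
   \<union> {mat3 0 0 x y 0 0 0 z 0 | x y z. x*y*z=1}"

lemma SC_mult: assumes "M \<in> SC" "N \<in> SC" shows "M ** N \<in> SC"
proof -
  from assms(1) obtain x y z where m: "x*y*z=1" "M = mat3 x 0 0 0 y 0 0 0 z \<or> M = mat3 0 x 0 0 0 y z 0 0 \<or> M = mat3 0 0 x y 0 0 0 z 0"
    unfolding SC_def by blast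
  from assms(2) obtain x2 y2 z2 where n: "x2*y2*z2=1" "N = mat3 x2 0 0 0 y2 0 0 0 z2 \<or> N = mat3 0 x2 0 0 0 y2 z2 0 0 \<or> N = mat3 0 0 x2 y2 0 0 0 z2 0"
    unfolding SC_def by blast
  have p: "(x*a)*(y*b)*(z*c) = 1" if "a*b*c = 1" for a b c using m(1) that
    by (metis mult.assoc mult.left_commute mult_1_right)
  have p1: "(x*y2)*(y*z2)*(z*x2) = 1" using p[of y2 z2 x2] n(1) by (simp add: ac_simps)
  have p2: "(x*z2)*(y*x2)*(z*y2) = 1" using p[of z2 x2 y2] n(1) by (simp add: ac_simps)
  show ?thesis using m(2) n(2) unfolding SC_def
    by (elim disjE; simp only: mat3_mult mult_zero_left mult_zero_right add_0 add_0_right mat3_eq;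
        (insert p[OF n(1)] p1 p2; blast))
qed

lemma SC_cube: assumes "M \<in> SC" "M ** M ** M \<noteq> mat 1"
  shows "\<exists>x y z. M = mat3 x 0 0 0 y 0 0 0 z"
proof -
  from assms(1) obtain x y z where m: "x*y*z=1" "M = mat3 x 0 0 0 y 0 0 0 z \<or> M = mat3 0 x 0 0 0 y z 0 0 \<or> M = mat3 0 0 x y 0 0 0 z 0"
    unfolding SC_def by blast
  show ?thesis using m assms(2) by (auto simp: mat3_mult mat1 mat3_eq ac_simps)
qed

lemma SC_comm: assumes "M \<in> SC" "N \<in> SC" "M ** M ** M \<noteq> mat 1" "N ** N ** N \<noteq> mat 1"
  shows "M ** N = N ** M"
  using SC_cube[OF assms(1,3)] SC_cube[OF assms(2,4)] by (auto simp: mat3_mult mat3_eq ac_simps)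

lemma SC_idem: assumes "M \<in> SC" "M ** M = M" shows "M = mat 1"
proof -
  from assms(1) obtain x y z where m: "x*y*z=1" "M = mat3 x 0 0 0 y 0 0 0 z \<or> M = mat3 0 x 0 0 0 y z 0 0 \<or> M = mat3 0 0 x y 0 0 0 z 0"
    unfolding SC_def by blast
  have nz: "x \<noteq> 0" "y \<noteq> 0" "z \<noteq> 0" using m(1) by auto
  have sq: "a*a = a \<Longrightarrow> a \<noteq> 0 \<Longrightarrow> a = 1" for a :: complex
    by (metis mult_cancel_right2)
  show ?thesis using m(2) assms(2) nz sq by (auto simp: mat3_mult mat1 mat3_eq)
qed

lemma inv_GL3: assumes "A ** B = mat 1" "B ** A = mat 1" shows "inv\<^bsub>GL3\<^esub> A = B"
  unfolding m_inv_def GL3_def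
proof (simp, rule the_equality)
  show "invertible B \<and> A ** B = mat 1 \<and> B ** A = mat 1" using assms invertible_def by blast
  fix y assume "invertible y \<and> A ** y = mat 1 \<and> y ** A = mat 1"
  then have "y = (B ** A) ** y" "B ** (A ** y) = B" by (auto simp: assms)
  then show "y = B" by (metis matrix_mul_assoc)
qed

lemma carrier_C: "carrier (Cgrp n a b) \<subseteq> SC"
proof
  fix M assume "M \<in> carrier (Cgrp n a b)"
  then have "M \<in> generate GL3 {Fmat n a b, Emat}" by (simp add: Cgrp_def mat_group_def)
  then show "M \<in> SC"
  proof (induction rule: generate.induct)
    case one
    then show ?case by (auto simp: GL3_def mat1 SC_def mat3_eq)
  next
    case (incl h)
    have e: "eta n \<noteq> 0" by (simp add: eta_def)
    have "eta n powi a * eta n powi b * eta n powi (-a-b) = 1"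
      using e by (simp add: power_int_add[symmetric])
    then show ?case using incl unfolding SC_def Fmat_def diag3_def Emat_def by (auto simp: mat3_eq)
  next
    case (inv h)
    show ?case
    proof (cases "h = Emat")
      case True
      have "inv\<^bsub>GL3\<^esub> h = mat3 0 0 1 1 0 0 0 1 0"
        using True by (intro inv_GL3) (simp_all add: Emat_def mat3_mult mat1)
      then show ?thesis unfolding SC_def by (auto simp: mat3_eq)
    next
      case False
      then have h: "h = Fmat n a b" using inv by auto
      define x where "x = eta n powi a"
      define y where "y = eta n powi b"
      define z where "z = eta n powi (-a-b)"
      have e: "eta n \<noteq> 0" by (simp add: eta_def)
      have xyz: "x*y*z = 1" "x \<noteq> 0" "y \<noteq> 0" "z \<noteq> 0"
        using e by (simp_all add: x_def y_def z_def power_int_add[symmetric])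
      have "inv\<^bsub>GL3\<^esub> h = mat3 (1/x) 0 0 0 (1/y) 0 0 0 (1/z)"
        using xyz h by (intro inv_GL3) (simp_all add: Fmat_def diag3_def x_def[symmetric] y_def[symmetric] z_def[symmetric] mat3_mult mat1)
      moreover have "(1/x)*(1/y)*(1/z) = 1" using xyz by (simp add: field_simps)
      ultimately show ?thesis unfolding SC_def by blast
    qed
  next
    case (eng h1 h2)
    then show ?case using SC_mult by (simp add: GL3_def)
  qed
qed

lemma G1_form: "G1 = mat3 (exp (7 * pi * \<i> / 9)) 0 0 0 (- exp (4 * pi * \<i> / 9)) 0 0 0 (- exp (7 * pi * \<i> / 9))"
  by (simp add: G1_def diag3_def)

lemma G2_form: "G2 = (let p = exp (4 * pi * \<i> / 9); q = exp (7 * pi * \<i> / 9); s = 1 / complex_of_real (sqrt 2) in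
     mat3 (- p / 2) (s * q) (p / 2) (s * q) 0 (s * q) (p / 2) (s * q) (- p / 2))"
  by (simp add: G2_def)

lemma cube1: "mat3 q 0 0 0 (-p) 0 0 0 (-q) ** mat3 q 0 0 0 (-p) 0 0 0 (-q) ** mat3 q 0 0 0 (-p) 0 0 0 (-q) \<noteq> mat 1"
  by (auto simp: mat3_mult mat1 mat3_eq)

lemma cube2: "(let M = mat3 (- p / 2) (s * q) (p / 2) (s * q) 0 (s * q) (p / 2) (s * q) (- p / 2) in M ** M ** M) \<noteq> mat 1"
  by (simp add: Let_def mat3_mult mat1 mat3_eq algebra_simps)

lemma noncomm: assumes "p \<noteq> 0" "q \<noteq> 0"
  shows "mat3 q 0 0 0 (-p) 0 0 0 (-q) ** mat3 (- p / 2) (s * q) (p / 2) (s * q) 0 (s * q) (p / 2) (s * q) (- p / 2)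
   \<noteq> mat3 (- p / 2) (s * q) (p / 2) (s * q) 0 (s * q) (p / 2) (s * q) (- p / 2) ** mat3 q 0 0 0 (-p) 0 0 0 (-q)"
  using assms by (simp add: mat3_mult mat3_eq)

lemma G1_cube: "G1 ** G1 ** G1 \<noteq> mat 1"
  unfolding G1_form using cube1 by blast
lemma G2_cube: "G2 ** G2 ** G2 \<noteq> mat 1"
  using cube2 unfolding G2_form Let_def by blast
lemma G12: "G1 ** G2 \<noteq> G2 ** G1"
  unfolding G1_form G2_form Let_def by (rule noncomm) simp_all

theorem theorem11:
  shows "\<not> (\<exists>(n::nat) (a::int) (b::int). n > 0 \<and> Fr162x4 \<cong> Cgrp n a b)"
proof
  assume "\<exists>(n::nat) (a::int) (b::int). n > 0 \<and> Fr162x4 \<cong> Cgrp n a b"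
  then obtain n a b where "Fr162x4 \<cong> Cgrp n a b" by blast
  then obtain f where f: "f \<in> iso Fr162x4 (Cgrp n a b)" unfolding is_iso_def by blast
  let ?F = "generate GL3 {G1, G2, FUM}"
  have cF: "carrier Fr162x4 = ?F" by (simp add: Fr162x4_def mat_group_def)
  have cC: "carrier (Cgrp n a b) \<subseteq> SC" by (rule carrier_C)
  have fC: "f x \<in> SC" if "x \<in> ?F" for x
    using f that cF cC unfolding iso_def hom_def by auto
  have fm: "f (x ** y) = f x ** f y" if "x \<in> ?F" "y \<in> ?F" for x y
    using f that cF unfolding iso_def hom_def by (simp add: Fr162x4_def Cgrp_def mat_group_def GL3_def)
  have inj: "inj_on f ?F" using f cF unfolding iso_def bij_betw_def by auto
  have mF: "x ** y \<in> ?F" if "x \<in> ?F" "y \<in> ?F" for x y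
    using generate.eng[OF that] by (simp add: GL3_def)
  have oneF: "mat 1 \<in> ?F" using generate.one[of GL3] by (simp add: GL3_def)
  have f1: "f (mat 1) = mat 1"
    using SC_idem[OF fC[OF oneF]] fm[OF oneF oneF] by simp
  have cube: "f x ** f x ** f x \<noteq> mat 1" if "x \<in> ?F" "x ** x ** x \<noteq> mat 1" for x
  proof
    assume "f x ** f x ** f x = mat 1"
    then have "f (x ** x ** x) = f (mat 1)" using fm mF that(1) f1 by simp
    then show False using inj_onD[OF inj _ mF[OF mF[OF that(1) that(1)] that(1)] oneF] that(2) by blast
  qed
  have g1: "G1 \<in> ?F" and g2: "G2 \<in> ?F" by (auto intro: generate.incl)
  have "f G1 ** f G2 = f G2 ** f G1"
    by (rule SC_comm[OF fC[OF g1] fC[OF g2] cube[OF g1 G1_cube] cube[OF g2 G2_cube]])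
  then have "f (G1 ** G2) = f (G2 ** G1)" using fm g1 g2 by simp
  then have "G1 ** G2 = G2 ** G1" using inj_onD[OF inj _ mF[OF g1 g2] mF[OF g2 g1]] by blast
  then show False using G12 by blast
qed
end
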